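(* For every $(\varepsilon,\delta)\in\mathbb{R}^2$, the transformation $\sigma_{(\varepsilon,\delta)}$ of the set of overmarked boxes commutes with the involution $j$, and therefore induces a transformation of the set of marked boxes.
   Context: Let $V$ be a 3-dimensional real vector space. An overmarked box is $\Theta=((p,q,r,s;t,b),(P,Q,R,S;T,B))$ with $p,\dots,b\in\mathbf{P}(V)$ and lines $P,\dots,B$ of $\mathbf{P}(V)$ such that $P=ts$, $Q=tr$, $R=bq$, $S=bp$, $T=pq$, $B=rs$ (here $xy$ is the line through points $x,y$) and $T\cap B\notin\{p,q,r,s,t,b\}$. A $\Theta$-basis is a basis of $V$, unique up to scaling, in which $p=[-1:1:0]$, $q=[1:1:0]$, $r=[1:0:1]$, $s=[-1:0:1]$. The involution $j$ maps $\Theta$ to $((q,p,s,r;t,b),(Q,P,S,R;T,B))$; marked boxes are $j$-orbits. For $(\varepsilon,\delta)\in\mathbb{R}^2$ let $$\Sigma_{(\varepsilon,\delta)}=\begin{pmatrix}1&0&0\\0&e^{-\delta}\cosh\varepsilon&-\sinh\varepsilon\\0&-\sinh\varepsilon&e^{\delta}\cosh\varepsilon\end{pmatrix},$$ and let $\sigma_{(\varepsilon,\delta)}(\Theta)$ be the image of $\Theta$ (points and lines) under the projective transformation whose matrix in a $\Theta$-basis is $\Sigma_{(\varepsilon,\delta)}$. *)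

theory Defs
  imports "HOL-Analysis.Analysis"
begin

text \<open>We take V = real^3 (any 3-dimensional real vector space is isomorphic to it).
  A point of P(V) is a 1-dimensional linear subspace of V, a line of P(V) is a
  2-dimensional linear subspace.\<close>

definition is_ppoint :: "(real^3) set \<Rightarrow> bool" where
  "is_ppoint x \<longleftrightarrow> subspace x \<and> dim x = 1"

definition is_pline :: "(real^3) set \<Rightarrow> bool" where
  "is_pline L \<longleftrightarrow> subspace L \<and> dim L = 2"

text \<open>The line xy through two points.\<close>
definition pjoin :: "(real^3) set \<Rightarrow> (real^3) set \<Rightarrow> (real^3) set" where
  "pjoin x y = span (x \<union> y)"

text \<open>Homogeneous coordinates [a:b:c] relative to a basis given by the columns of A.\<close>
definition hpoint :: "real^3^3 \<Rightarrow> real \<Rightarrow> real \<Rightarrow> real \<Rightarrow> (real^3) set" where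
  "hpoint A a b c = span {A *v (\<chi> i. if i = 1 then a else if i = 2 then b else c)}"

text \<open>Boxes: OBox p q r s t b P Q R S T B.\<close>
datatype obox = OBox "(real^3) set" "(real^3) set" "(real^3) set" "(real^3) set"
  "(real^3) set" "(real^3) set" "(real^3) set" "(real^3) set" "(real^3) set"
  "(real^3) set" "(real^3) set" "(real^3) set"

fun overmarked :: "obox \<Rightarrow> bool" where
  "overmarked (OBox p q r s t b P Q R S T B) \<longleftrightarrow>
     is_ppoint p \<and> is_ppoint q \<and> is_ppoint r \<and> is_ppoint s \<and> is_ppoint t \<and> is_ppoint b \<and>
     is_pline P \<and> is_pline Q \<and> is_pline R \<and> is_pline S \<and> is_pline T \<and> is_pline B \<and>
     P = pjoin t s \<and> Q = pjoin t r \<and> R = pjoin b q \<and> S = pjoin b p \<and>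
     T = pjoin p q \<and> B = pjoin r s \<and>
     T \<noteq> B \<and> T \<inter> B \<notin> {p, q, r, s, t, b}"

text \<open>The involution j.\<close>
fun jbox :: "obox \<Rightarrow> obox" where
  "jbox (OBox p q r s t b P Q R S T B) = OBox q p s r t b Q P S R T B"

text \<open>A Theta-basis, encoded as the invertible matrix whose columns are the basis vectors.\<close>
fun theta_basis :: "obox \<Rightarrow> real^3^3 \<Rightarrow> bool" where
  "theta_basis (OBox p q r s t b P Q R S T B) A \<longleftrightarrow>
     invertible A \<and> p = hpoint A (-1) 1 0 \<and> q = hpoint A 1 1 0 \<and>
     r = hpoint A 1 0 1 \<and> s = hpoint A (-1) 0 1"

text \<open>Image of a box (points and lines) under a map of V.\<close>
fun obox_image :: "(real^3 \<Rightarrow> real^3) \<Rightarrow> obox \<Rightarrow> obox" where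
  "obox_image f (OBox p q r s t b P Q R S T B) =
     OBox (f ` p) (f ` q) (f ` r) (f ` s) (f ` t) (f ` b)
          (f ` P) (f ` Q) (f ` R) (f ` S) (f ` T) (f ` B)"

definition Sigma_mat :: "real \<Rightarrow> real \<Rightarrow> real^3^3" where
  "Sigma_mat \<epsilon> \<delta> = (\<chi> i j.
     if i = 1 then (if j = 1 then 1 else 0)
     else if i = 2 then (if j = 1 then 0 else if j = 2 then exp (-\<delta>) * cosh \<epsilon> else - sinh \<epsilon>)
     else (if j = 1 then 0 else if j = 2 then - sinh \<epsilon> else exp \<delta> * cosh \<epsilon>))"

text \<open>sigma: the projective transformation with matrix Sigma in a Theta-basis.\<close>
definition sigma :: "real \<Rightarrow> real \<Rightarrow> obox \<Rightarrow> obox" where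
  "sigma \<epsilon> \<delta> \<Theta> = (let A = (SOME A. theta_basis \<Theta> A) in
     obox_image (\<lambda>v. A *v (Sigma_mat \<epsilon> \<delta> *v (matrix_inv A *v v))) \<Theta>)"

end

theory Submission
  imports Defs
begin


lemma minv: "invertible (A::real^'n^'n) \<Longrightarrow> A ** matrix_inv A = mat 1 \<and> matrix_inv A ** A = mat 1"
  unfolding invertible_def matrix_inv_def by (rule someI_ex)

lemma minv_inv: "invertible (A::real^'n^'n) \<Longrightarrow> invertible (matrix_inv A)"
  using minv unfolding invertible_def by blast

lemma span_join: "span (span A \<union> span B) = span (A \<union> B)"
proof
  show "span (span A \<union> span B) \<subseteq> span (A \<union> B)"
    by (intro span_minimal) (auto intro: span_mono[THEN subsetD])
  show "span (A \<union> B) \<subseteq> span (span A \<union> span B)"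
    by (intro span_mono) (auto intro: span_base)
qed

lemma img_ppoint: "linear f \<Longrightarrow> inj f \<Longrightarrow> is_ppoint x \<Longrightarrow> is_ppoint (f ` x)"
  unfolding is_ppoint_def
  by (metis dim_image_eq inj_on_subset subset_UNIV linear_subspace_image)

lemma img_pline: "linear f \<Longrightarrow> inj f \<Longrightarrow> is_pline x \<Longrightarrow> is_pline (f ` x)"
  unfolding is_pline_def
  by (metis dim_image_eq inj_on_subset subset_UNIV linear_subspace_image)

lemma img_pjoin: "linear f \<Longrightarrow> f ` pjoin x y = pjoin (f ` x) (f ` y)"
  unfolding pjoin_def by (simp add: linear_span_image[symmetric] image_Un)

lemma image_overmarked:
  assumes f: "linear f" "inj f" and ov: "overmarked \<Theta>"
  shows "overmarked (obox_image f \<Theta>)"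
proof (cases \<Theta>)
  case (OBox p q r s t b P Q R S T B)
  have ii: "\<And>X Y. (f ` X = f ` Y) = (X = Y)" using f(2) by (simp add: inj_image_eq_iff)
  have int: "\<And>X Y. f ` X \<inter> f ` Y = f ` (X \<inter> Y)" using f(2) by (simp add: image_Int)
  have j: "\<And>x y. pjoin (f ` x) (f ` y) = f ` pjoin x y" using img_pjoin[OF f(1)] by simp
  show ?thesis using ov unfolding OBox
    apply (simp only: overmarked.simps obox_image.simps)
    apply (elim conjE)
    apply (simp only: j int ii)
    apply (intro conjI img_ppoint[OF f] img_pline[OF f])
    apply (simp_all only: ii insert_iff empty_iff)
    apply simp_all
    done
qed



definition v3 :: "real \<Rightarrow> real \<Rightarrow> real \<Rightarrow> real^3" where
  "v3 a b c = (\<chi> i. if i = 1 then a else if i = 2 then b else c)"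

lemma v3_nth[simp]: "v3 a b c $ 1 = a" "v3 a b c $ 2 = b" "v3 a b c $ 3 = c"
  by (simp_all add: v3_def)

lemma hpoint_v3: "hpoint A a b c = span {A *v v3 a b c}"
  by (simp add: hpoint_def v3_def)

lemma v3_eq: "(x::real^3) = v3 (x$1) (x$2) (x$3)"
  by (simp add: vec_eq_iff forall_3)

lemma mv3: "(M::real^3^3) *v x = v3 (M$1$1*x$1 + M$1$2*x$2 + M$1$3*x$3)
   (M$2$1*x$1 + M$2$2*x$2 + M$2$3*x$3) (M$3$1*x$1 + M$3$2*x$2 + M$3$3*x$3)"
  by (simp add: vec_eq_iff forall_3 matrix_vector_mult_def sum_3)

lemma v3_inj[simp]: "(v3 a b c = v3 a' b' c') = (a = a' \<and> b = b' \<and> c = c')"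
  by (metis v3_nth)

lemma v3_scale[simp]: "k *\<^sub>R v3 a b c = v3 (k*a) (k*b) (k*c)"
  by (simp add: vec_eq_iff forall_3)

lemma Sigma_inv: "invertible (Sigma_mat e d)"
proof -
  have h: "exp (-d) * exp d = 1" by (simp add: exp_minus field_simps)
  have c: "cosh e * cosh e - sinh e * sinh e = 1" using cosh_square_eq[of e]
    by (simp add: power2_eq_square)
  have "det (Sigma_mat e d) = exp (-d) * cosh e * (exp d * cosh e) - sinh e * sinh e"
    by (simp add: det_3 Sigma_mat_def)
  also have "\<dots> = (exp (-d) * exp d) * cosh e * cosh e - sinh e * sinh e"
    by (simp only: mult_ac)
  also have "\<dots> = 1" unfolding h using c by simp
  finally show ?thesis by (simp add: invertible_det_nz)
qed

lemma in_span1: "y \<in> span {x} \<Longrightarrow> \<exists>k. y = k *\<^sub>R x"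
  by (auto simp: span_singleton)

lemma hp_rel:
  fixes A A' :: "real^3^3"
  assumes A: "invertible A" and h: "span {A' *v v} = span {A *v v}"
  shows "\<exists>k. (matrix_inv A ** A') *v v = k *\<^sub>R v"
proof -
  have "A' *v v \<in> span {A *v v}" using h span_base by blast
  then obtain k where "A' *v v = k *\<^sub>R (A *v v)" using in_span1 by blast
  hence "matrix_inv A *v (A' *v v) = k *\<^sub>R (matrix_inv A *v (A *v v))"
    by (simp add: matrix_vector_mult_scaleR)
  thus ?thesis using minv[OF A]
    by (simp add: matrix_vector_mul_assoc)
qed

lemma frame_unique:
  assumes M: "\<exists>k. M *v v3 (-1) 1 0 = k *\<^sub>R v3 (-1) 1 0"
     "\<exists>k. M *v v3 1 1 0 = k *\<^sub>R v3 1 1 0"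
     "\<exists>k. M *v v3 1 0 1 = k *\<^sub>R v3 1 0 1"
     "\<exists>k. M *v v3 (-1) 0 1 = k *\<^sub>R v3 (-1) 0 1"
  shows "\<exists>k. M = k *\<^sub>R mat 1"
proof -
  from M obtain k1 k2 k3 k4 where
    "M *v v3 (-1) 1 0 = k1 *\<^sub>R v3 (-1) 1 0"
     "M *v v3 1 1 0 = k2 *\<^sub>R v3 1 1 0"
     "M *v v3 1 0 1 = k3 *\<^sub>R v3 1 0 1"
     "M *v v3 (-1) 0 1 = k4 *\<^sub>R v3 (-1) 0 1" by blast
  hence e: "- M$1$1 + M$1$2 = -k1" "- M$2$1 + M$2$2 = k1" "- M$3$1 + M$3$2 = 0"
    "M$1$1 + M$1$2 = k2" "M$2$1 + M$2$2 = k2" "M$3$1 + M$3$2 = 0"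
    "M$1$1 + M$1$3 = k3" "M$2$1 + M$2$3 = 0" "M$3$1 + M$3$3 = k3"
    "- M$1$1 + M$1$3 = -k4" "- M$2$1 + M$2$3 = 0" "- M$3$1 + M$3$3 = k4"
    by (simp_all only: mv3 v3_scale v3_inj, simp_all)
  show ?thesis
    apply (rule exI[of _ k1])
    apply (simp add: vec_eq_iff forall_3 mat_def)
    using e by linarith
qed



lemma theta_unique:
  assumes "theta_basis \<Theta> A" "theta_basis \<Theta> A'"
  shows "\<exists>c. c \<noteq> 0 \<and> A' = c *\<^sub>R A"
proof (cases \<Theta>)
  case (OBox p q r s t b P Q R S T B)
  have A: "invertible A" and A': "invertible A'" using assms OBox by auto
  have h: "span {A' *v v3 (-1) 1 0} = span {A *v v3 (-1) 1 0}"
      "span {A' *v v3 1 1 0} = span {A *v v3 1 1 0}"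
      "span {A' *v v3 1 0 1} = span {A *v v3 1 0 1}"
      "span {A' *v v3 (-1) 0 1} = span {A *v v3 (-1) 0 1}"
    using assms OBox by (auto simp: hpoint_v3)
  obtain k where k: "matrix_inv A ** A' = k *\<^sub>R mat 1"
    using frame_unique[OF hp_rel[OF A h(1)] hp_rel[OF A h(2)] hp_rel[OF A h(3)] hp_rel[OF A h(4)]]
    by blast
  have "A' = A ** (matrix_inv A ** A')"
    using minv[OF A] by (simp add: matrix_mul_assoc)
  also have "\<dots> = k *\<^sub>R A" unfolding k by (simp add: matrix_scalar_ac)
  finally have eq: "A' = k *\<^sub>R A" .
  have "k \<noteq> 0"
  proof
    assume "k = 0"
    hence "A' = 0" using eq by simp
    then obtain X where "(0::real^3^3) ** X = mat 1" using A' unfolding invertible_def by auto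
    hence "((0::real^3^3) ** X) $ 1 $ 1 = (mat 1::real^3^3) $ 1 $ 1" by simp
    thus False by (simp add: matrix_matrix_mult_def mat_def)
  qed
  with eq show ?thesis by blast
qed

definition Dm :: "real^3^3" where
  "Dm = (\<chi> i j. if i = j then (if i = 1 then -1 else 1) else 0)"

lemma Dm_v3: "Dm *v v3 a b c = v3 (-a) b c"
  by (simp add: mv3 Dm_def)

lemma Dm_sq: "Dm ** Dm = mat 1"
  by (simp add: vec_eq_iff forall_3 matrix_matrix_mult_def sum_3 Dm_def mat_def)

lemma Dm_inv: "invertible Dm"
  using Dm_sq unfolding invertible_def by blast

lemma Dm_Sigma: "Dm ** Sigma_mat e d ** Dm = Sigma_mat e d"
  by (simp add: vec_eq_iff forall_3 matrix_matrix_mult_def sum_3 Dm_def Sigma_mat_def)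

lemma theta_jbox: "theta_basis \<Theta> A \<Longrightarrow> theta_basis (jbox \<Theta>) (A ** Dm)"
  by (cases \<Theta>) (auto simp: hpoint_v3 matrix_vector_mul_assoc[symmetric] Dm_v3 invertible_mult Dm_inv)

lemma minv_unique:
  fixes B X :: "real^3^3"
  assumes "invertible B" "B ** X = mat 1"
  shows "matrix_inv B = X"
proof -
  have "matrix_inv B = matrix_inv B ** (B ** X)" using assms by simp
  also have "\<dots> = (matrix_inv B ** B) ** X" by (simp add: matrix_mul_assoc)
  also have "\<dots> = X" using minv[OF assms(1)] by simp
  finally show ?thesis .
qed

lemma conj_eq:
  fixes A :: "real^3^3"
  assumes A: "invertible A" and c: "c \<noteq> 0"
  shows "(c *\<^sub>R (A ** Dm)) ** Sigma_mat e d ** matrix_inv (c *\<^sub>R (A ** Dm))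
       = A ** Sigma_mat e d ** matrix_inv A"
proof -
  have inv: "invertible (c *\<^sub>R (A ** Dm))"
    by (simp add: scalar_invertible c invertible_mult A Dm_inv)
  have "(c *\<^sub>R (A ** Dm)) ** ((1/c) *\<^sub>R (Dm ** matrix_inv A)) = mat 1"
  proof -
    have "(c *\<^sub>R (A ** Dm)) ** ((1/c) *\<^sub>R (Dm ** matrix_inv A))
       = (c * (1/c)) *\<^sub>R (A ** (Dm ** Dm) ** matrix_inv A)"
      by (simp add: matrix_scalar_ac scalar_matrix_assoc[symmetric] matrix_mul_assoc)
    also have "\<dots> = mat 1" using c minv[OF A] by (simp add: Dm_sq)
    finally show ?thesis .
  qed
  hence mi: "matrix_inv (c *\<^sub>R (A ** Dm)) = (1/c) *\<^sub>R (Dm ** matrix_inv A)"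
    using minv_unique[OF inv] by blast
  have "(c *\<^sub>R (A ** Dm)) ** Sigma_mat e d ** ((1/c) *\<^sub>R (Dm ** matrix_inv A))
      = (c * (1/c)) *\<^sub>R (A ** (Dm ** Sigma_mat e d ** Dm) ** matrix_inv A)"
    by (simp add: matrix_scalar_ac scalar_matrix_assoc[symmetric] matrix_mul_assoc)
  also have "\<dots> = A ** Sigma_mat e d ** matrix_inv A" using c by (simp add: Dm_Sigma)
  finally show ?thesis unfolding mi .
qed

lemma main:
  assumes ov: "overmarked \<Theta>" and ex: "\<exists>A. theta_basis \<Theta> A"
  shows "overmarked (sigma \<epsilon> \<delta> \<Theta>) \<and> sigma \<epsilon> \<delta> (jbox \<Theta>) = jbox (sigma \<epsilon> \<delta> \<Theta>)"
proof -
  define A where "A = (SOME A. theta_basis \<Theta> A)"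
  have tA: "theta_basis \<Theta> A" unfolding A_def using ex by (rule someI_ex)
  have Ai: "invertible A" using tA by (cases \<Theta>) auto
  define A2 where "A2 = (SOME A. theta_basis (jbox \<Theta>) A)"
  have tA2: "theta_basis (jbox \<Theta>) A2" unfolding A2_def using theta_jbox[OF tA] by (rule someI)
  obtain c where c: "c \<noteq> 0" "A2 = c *\<^sub>R (A ** Dm)"
    using theta_unique[OF theta_jbox[OF tA] tA2] by blast
  have fA: "(\<lambda>v. A *v (Sigma_mat \<epsilon> \<delta> *v (matrix_inv A *v v)))
      = (*v) (A ** Sigma_mat \<epsilon> \<delta> ** matrix_inv A)"
    by (simp add: fun_eq_iff matrix_vector_mul_assoc matrix_mul_assoc)
  have fA2: "(\<lambda>v. A2 *v (Sigma_mat \<epsilon> \<delta> *v (matrix_inv A2 *v v)))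
      = (*v) (A ** Sigma_mat \<epsilon> \<delta> ** matrix_inv A)"
    unfolding c(2) conj_eq[OF Ai c(1), symmetric]
    by (simp add: fun_eq_iff matrix_vector_mul_assoc matrix_mul_assoc)
  have s1: "sigma \<epsilon> \<delta> \<Theta> = obox_image ((*v) (A ** Sigma_mat \<epsilon> \<delta> ** matrix_inv A)) \<Theta>"
    unfolding sigma_def Let_def A_def[symmetric] fA ..
  have s2: "sigma \<epsilon> \<delta> (jbox \<Theta>) = obox_image ((*v) (A ** Sigma_mat \<epsilon> \<delta> ** matrix_inv A)) (jbox \<Theta>)"
    unfolding sigma_def Let_def A2_def[symmetric] fA2 ..
  have inv: "invertible (A ** Sigma_mat \<epsilon> \<delta> ** matrix_inv A)"
    by (intro invertible_mult Ai Sigma_inv minv_inv)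
  show ?thesis unfolding s1 s2
  proof
    show "overmarked (obox_image ((*v) (A ** Sigma_mat \<epsilon> \<delta> ** matrix_inv A)) \<Theta>)"
      by (rule image_overmarked[OF matrix_vector_mul_linear inj_matrix_vector_mult[OF inv] ov])
    show "obox_image ((*v) (A ** Sigma_mat \<epsilon> \<delta> ** matrix_inv A)) (jbox \<Theta>) =
      jbox (obox_image ((*v) (A ** Sigma_mat \<epsilon> \<delta> ** matrix_inv A)) \<Theta>)"
      by (cases \<Theta>) simp
  qed
qed



lemma ppoint_gen:
  assumes "is_ppoint x" shows "\<exists>u. u \<noteq> 0 \<and> x = span {u}"
proof -
  have sx: "subspace x" and dx: "dim x = 1" using assms unfolding is_ppoint_def by auto
  obtain Bs where Bs: "Bs \<subseteq> x" "independent Bs" "x \<subseteq> span Bs" "card Bs = dim x"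
    using basis_exists by blast
  then obtain u where u: "Bs = {u}" using dx card_1_singletonE by metis
  have "u \<noteq> 0" using Bs(2) u dependent_zero by blast
  moreover have "span {u} \<subseteq> x" using Bs(1) u sx by (simp add: span_minimal)
  ultimately show ?thesis using Bs(3) u by blast
qed

lemma pline_meet:
  assumes T: "is_pline T" and B: "is_pline B" and ne: "T \<noteq> B" and x: "is_ppoint x"
    and xT: "x \<subseteq> T" and xB: "x \<subseteq> B"
  shows "T \<inter> B = x"
proof -
  have sT: "subspace T" "dim T = 2" using T unfolding is_pline_def by auto
  have sB: "subspace B" "dim B = 2" using B unfolding is_pline_def by auto
  have sI: "subspace (T \<inter> B)" using sT sB by (simp add: subspace_inter)
  have d: "dim (T \<inter> B) \<le> 1"
  proof (rule ccontr)
    assume "\<not> dim (T \<inter> B) \<le> 1"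
    hence "dim (T \<inter> B) \<ge> 2" by simp
    hence "T \<inter> B = T" using sT sI by (intro subspace_dim_equal) auto
    moreover have "T \<inter> B = B" using sB sI \<open>dim (T \<inter> B) \<ge> 2\<close> by (intro subspace_dim_equal) auto
    ultimately show False using ne by simp
  qed
  show ?thesis
    apply (rule subspace_dim_equal[symmetric])
    using x xT xB sI d unfolding is_ppoint_def by auto
qed

lemma dim_span1: "dim (span {u::real^3}) \<le> 1"
proof -
  have "dim {u} \<le> card {u}" by (rule dim_le_card) (auto intro: span_base)
  thus ?thesis by simp
qed

lemma in_span_pair: "a *\<^sub>R x + b *\<^sub>R y \<in> span {x, y}"
  by (intro span_add span_scale span_base) auto

lemma scale_in: "c \<noteq> 0 \<Longrightarrow> c *\<^sub>R x \<in> span S \<Longrightarrow> x \<in> span S"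
  using span_scale[of "c *\<^sub>R x" S "1/c"] by simp

lemma span_sc: "c \<noteq> 0 \<Longrightarrow> span {c *\<^sub>R x} = span {x}"
proof
  show "span {c *\<^sub>R x} \<subseteq> span {x}"
    by (intro span_minimal) (auto intro: span_scale span_base)
  assume c: "c \<noteq> 0"
  have "x \<in> span {c *\<^sub>R x}" by (rule scale_in[OF c]) (auto intro: span_base)
  thus "span {x} \<subseteq> span {c *\<^sub>R x}" by (intro span_minimal) auto
qed

lemma theta_exists:
  assumes ov: "overmarked \<Theta>" shows "\<exists>A. theta_basis \<Theta> A"
proof (cases \<Theta>)
  case (OBox p q r s t b P Q R S T B)
  have o: "is_ppoint p \<and> is_ppoint q \<and> is_ppoint r \<and> is_ppoint s \<and> is_pline T \<and> is_pline B \<and>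
     T = pjoin p q \<and> B = pjoin r s \<and> T \<noteq> B \<and> T \<inter> B \<noteq> p \<and> T \<inter> B \<noteq> q \<and> T \<inter> B \<noteq> r \<and> T \<inter> B \<noteq> s"
    using ov unfolding OBox overmarked.simps by blast
  obtain u1 where u1: "u1 \<noteq> 0" "p = span {u1}" using ppoint_gen o by blast
  obtain u2 where u2: "u2 \<noteq> 0" "q = span {u2}" using ppoint_gen o by blast
  obtain u3 where u3: "u3 \<noteq> 0" "r = span {u3}" using ppoint_gen o by blast
  obtain u4 where u4: "u4 \<noteq> 0" "s = span {u4}" using ppoint_gen o by blast
  have "T = pjoin p q" "B = pjoin r s" using o by blast+
  moreover have "{u1} \<union> {u2} = {u1, u2}" "{u3} \<union> {u4} = {u3, u4}" by auto
  ultimately have Te: "T = span {u1, u2}" and Be: "B = span {u3, u4}" unfolding u1(2) u2(2) u3(2) u4(2) pjoin_def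
    by (simp_all only: span_join)
  have Tl: "is_pline T" and Bl: "is_pline B" and TB: "T \<noteq> B"
    and nI: "T \<inter> B \<noteq> p" "T \<inter> B \<noteq> q" "T \<inter> B \<noteq> r" "T \<inter> B \<noteq> s" using o by blast+
  have dT: "dim T = 2" and dB: "dim B = 2" using Tl Bl unfolding is_pline_def by auto
  have pp: "is_ppoint p" "is_ppoint q" "is_ppoint r" "is_ppoint s" using o by blast+
  have n3: "u3 \<notin> T"
  proof
    assume "u3 \<in> T"
    hence "r \<subseteq> T" using u3 Te by (simp add: span_minimal)
    moreover have "r \<subseteq> B" using u3 Be by (simp add: span_mono)
    ultimately show False using pline_meet[OF Tl Bl TB pp(3)] nI by blast
  qed
  have n4: "u4 \<notin> T"
  proof
    assume "u4 \<in> T"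
    hence "s \<subseteq> T" using u4 Te by (simp add: span_minimal)
    moreover have "s \<subseteq> B" using u4 Be by (simp add: span_mono)
    ultimately show False using pline_meet[OF Tl Bl TB pp(4)] nI by blast
  qed
  have n1: "u1 \<notin> B"
  proof
    assume "u1 \<in> B"
    hence "p \<subseteq> B" using u1 Be by (simp add: span_minimal)
    moreover have "p \<subseteq> T" using u1 Te by (simp add: span_mono)
    ultimately show False using pline_meet[OF Tl Bl TB pp(1)] nI by blast
  qed
  have n2: "u2 \<notin> B"
  proof
    assume "u2 \<in> B"
    hence "q \<subseteq> B" using u2 Be by (simp add: span_minimal)
    moreover have "q \<subseteq> T" using u2 Te by (simp add: span_mono)
    ultimately show False using pline_meet[OF Tl Bl TB pp(2)] nI by blast
  qed
  have indep: "a = 0 \<and> b' = 0 \<and> c = 0" if e: "a *\<^sub>R u1 + b' *\<^sub>R u2 + c *\<^sub>R u3 = 0" for a b' c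
  proof -
    have c0: "c = 0"
    proof (rule ccontr)
      assume c: "c \<noteq> 0"
      have "c *\<^sub>R u3 = - (a *\<^sub>R u1 + b' *\<^sub>R u2)" using e by (simp add: add_eq_0_iff)
      also have "\<dots> = (-a) *\<^sub>R u1 + (-b') *\<^sub>R u2" by simp
      finally have "c *\<^sub>R u3 \<in> span {u1, u2}" using in_span_pair by metis
      thus False using scale_in[OF c] n3 Te by blast
    qed
    have b0: "b' = 0"
    proof (rule ccontr)
      assume b: "b' \<noteq> 0"
      have "b' *\<^sub>R u2 = (-a) *\<^sub>R u1" using e c0 by (simp add: add_eq_0_iff)
      hence "b' *\<^sub>R u2 \<in> span {u1}" by (simp add: span_neg span_scale span_base)
      hence "u2 \<in> span {u1}" by (rule scale_in[OF b])
      hence "span (insert u2 {u1}) = span {u1}" by (rule span_redundant)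
      hence "T = span {u1}" using Te by (simp add: insert_commute)
      thus False using dT dim_span1[of u1] by simp
    qed
    have "a *\<^sub>R u1 = 0" using e c0 b0 by simp
    hence "a = 0" using u1 by simp
    thus ?thesis using b0 c0 by simp
  qed
  define U :: "real^3^3" where "U = (\<chi> i j. if j = 1 then u1$i else if j = 2 then u2$i else u3$i)"
  have Uv: "U *v x = x$1 *\<^sub>R u1 + x$2 *\<^sub>R u2 + x$3 *\<^sub>R u3" for x
    by (simp add: vec_eq_iff forall_3 matrix_vector_mult_def sum_3 U_def algebra_simps)
  have "inj ((*v) U)" unfolding vec.inj_iff_eq_0
  proof (intro allI impI)
    fix x assume "U *v x = 0"
    hence "x$1 = 0 \<and> x$2 = 0 \<and> x$3 = 0" using indep Uv by metis
    thus "x = 0" by (simp add: vec_eq_iff forall_3)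
  qed
  hence Ui: "invertible U" using matrix_left_invertible_injective invertible_left_inverse by blast
  define w where "w = matrix_inv U *v u4"
  have "U *v w = u4" unfolding w_def using minv[OF Ui] by (simp add: matrix_vector_mul_assoc)
  hence u4e: "u4 = w$1 *\<^sub>R u1 + w$2 *\<^sub>R u2 + w$3 *\<^sub>R u3" using Uv by simp
  define al be ga where "al = w$1" "be = w$2" "ga = w$3"
  have u4e': "u4 = al *\<^sub>R u1 + be *\<^sub>R u2 + ga *\<^sub>R u3" using u4e al_be_ga_def by simp
  have ga: "ga \<noteq> 0"
  proof
    assume "ga = 0"
    hence "u4 = al *\<^sub>R u1 + be *\<^sub>R u2" using u4e' by simp
    thus False using n4 Te in_span_pair by metis
  qed
  have al: "al \<noteq> 0"
  proof
    assume a0: "al = 0"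
    show False
    proof (cases "be = 0")
      case True
      hence "u4 = ga *\<^sub>R u3" using u4e' a0 by simp
      hence "u4 \<in> span {u3}" by (simp add: span_scale span_base)
      hence "span (insert u4 {u3}) = span {u3}" by (rule span_redundant)
      hence "B = span {u3}" using Be by (simp add: insert_commute)
      thus False using dB dim_span1[of u3] by simp
    next
      case False
      have "be *\<^sub>R u2 = 1 *\<^sub>R u4 + (-ga) *\<^sub>R u3" using u4e' a0 by simp
      hence "be *\<^sub>R u2 \<in> span {u4, u3}" using in_span_pair by metis
      hence "u2 \<in> span {u3, u4}" using scale_in[OF False] by (simp add: insert_commute)
      thus False using n2 Be by simp
    qed
  qed
  have be: "be \<noteq> 0"
  proof
    assume b0: "be = 0"
    have "al *\<^sub>R u1 = 1 *\<^sub>R u4 + (-ga) *\<^sub>R u3" using u4e' b0 by simp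
    hence "al *\<^sub>R u1 \<in> span {u4, u3}" using in_span_pair by metis
    hence "u1 \<in> span {u3, u4}" using scale_in[OF al] by (simp add: insert_commute)
    thus False using n1 Be by simp
  qed
  define N :: "real^3^3" where "N = (\<chi> i j. if i = 1 then (if j = 1 then -al/2 else al/2)
     else if i = 2 then (if j = 3 then be/2 else -be/2) else (if j = 3 then ga else 0))"
  have "det N = al * be * ga / 2" by (simp add: det_3 N_def field_simps)
  moreover have "al * be * ga / 2 \<noteq> 0" using al be ga by simp
  ultimately have Ni: "invertible N" unfolding invertible_det_nz by metis
  define A where "A = U ** N"
  have Av: "A *v v3 x y z = U *v (N *v v3 x y z)" for x y z
    by (simp add: A_def matrix_vector_mul_assoc)
  have h1: "A *v v3 (-1) 1 0 = al *\<^sub>R u1" unfolding Av Uv by (simp add: mv3 N_def)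
  have h2: "A *v v3 1 1 0 = (-be) *\<^sub>R u2" unfolding Av Uv by (simp add: mv3 N_def)
  have h3: "A *v v3 1 0 1 = ga *\<^sub>R u3" unfolding Av Uv by (simp add: mv3 N_def)
  have h4: "A *v v3 (-1) 0 1 = u4" unfolding Av Uv u4e' by (simp add: mv3 N_def)
  have mb: "span {- (be *\<^sub>R u2)} = span {u2}" using span_sc[of "-be" u2] be by simp
  have "theta_basis \<Theta> A" unfolding OBox theta_basis.simps hpoint_v3 h1 h2 h3 h4
    using u1 u2 u3 u4 al be ga Ui Ni by (simp add: span_sc mb A_def invertible_mult)
  thus ?thesis by blast
qed


theorem lemma7p1:
  fixes \<epsilon> \<delta> :: real and \<Theta> :: obox
  assumes "overmarked \<Theta>"
  shows "overmarked (sigma \<epsilon> \<delta> \<Theta>) \<and> sigma \<epsilon> \<delta> (jbox \<Theta>) = jbox (sigma \<epsilon> \<delta> \<Theta>)"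
  using main[OF assms theta_exists[OF assms]] .

end
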